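(* Consider the system of ordinary differential equations \[ \dot u=r_{1}u(1-u)-a_{12}uv-a_{13}uw,\qquad \dot v=r_{2}v(1-v)+a_{21}uv,\qquad \dot w=-\mu w+a_{31}uw, \] with all parameters $r_1,r_2,\mu,a_{12},a_{13},a_{21},a_{31}$ positive. If $r_1\le a_{12}$, then every solution with positive initial data $u(0),v(0),w(0)>0$ satisfies $\lim_{t\to\infty}u(t)=0$ and $\lim_{t\to\infty}w(t)=0$. *)

theory Defs
  imports "HOL-Analysis.Analysis"
begin

end

theory Submission imports Defs begin

lemma deriv_at_pos:
  fixes f :: "real \<Rightarrow> real"
  assumes "(f has_real_derivative D) (at t within {0..})" "t > 0"
  shows "(f has_real_derivative D) (at t)"
proof -
  have "(f has_real_derivative D) (at t within {0<..})"
    by (rule has_field_derivative_subset[OF assms(1)]) auto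
  thus ?thesis using at_within_open[of t "{0<..}"] assms(2) by simp
qed

lemma incr_from:
  fixes f f' :: "real \<Rightarrow> real"
  assumes "T \<ge> 0" "\<And>t. t \<ge> T \<Longrightarrow> (f has_real_derivative f' t) (at t within {0..})"
    "\<And>t. t \<ge> T \<Longrightarrow> f' t \<ge> 0" "T \<le> s" "s \<le> t"
  shows "f s \<le> f t"
proof (rule DERIV_nonneg_imp_increasing_open[OF assms(5)])
  fix x assume "s < x" "x < t"
  thus "\<exists>y. DERIV f x :> y \<and> y \<ge> 0"
    using assms deriv_at_pos[OF assms(2)] by (intro exI[of _ "f' x"]) auto
next
  show "continuous_on {s..t} f"
    unfolding continuous_on_eq_continuous_within
  proof
    fix x assume x: "x \<in> {s..t}"
    have "continuous (at x within {0..}) f" using DERIV_continuous[OF assms(2)] x assms by auto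
    thus "continuous (at x within {s..t}) f"
      by (rule continuous_within_subset) (use assms in auto)
  qed
qed

lemma pos_sol:
  fixes x g :: "real \<Rightarrow> real"
  assumes "\<And>t. t \<ge> 0 \<Longrightarrow> (x has_real_derivative x t * g t) (at t within {0..})"
    "continuous_on {0..} g" "x 0 > 0" "t \<ge> 0"
  shows "x t > 0"
proof -
  define G where "G s = integral {0..s} g" for s
  have cg: "continuous_on {0..t} g" using assms(2) by (rule continuous_on_subset) auto
  have "\<And>s. s \<in> {0..t} \<Longrightarrow> ((\<lambda>s. x s * exp (- G s)) has_real_derivative 0) (at s within {0..t})"
  proof -
    fix s assume s: "s \<in> {0..t}"
    have dG: "(G has_real_derivative g s) (at s within {0..t})"
      unfolding G_def by (rule integral_has_real_derivative[OF cg s])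
    have dx: "(x has_real_derivative x s * g s) (at s within {0..t})"
      by (rule has_field_derivative_subset[OF assms(1)]) (use s in auto)
    show "((\<lambda>s. x s * exp (- G s)) has_real_derivative 0) (at s within {0..t})"
      using DERIV_mult[OF dx DERIV_exp[THEN DERIV_chain2, OF DERIV_minus[OF dG]]]
      by (simp add: algebra_simps)
  qed
  from has_field_derivative_zero_constant[OF _ this] obtain c where
    c: "\<forall>s\<in>{0..t}. x s * exp (- G s) = c" by auto
  hence "x t * exp (- G t) = x 0 * exp (- G 0)" using assms(4) by auto
  hence "x t * exp (- G t) > 0" using assms(3) by simp
  thus ?thesis by (simp add: zero_less_mult_iff)
qed

lemma exp_neg_lim: "c > 0 \<Longrightarrow> ((\<lambda>t::real. exp (- c * t)) \<longlongrightarrow> 0) at_top"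
proof -
  assume c: "c > 0"
  have "filterlim (\<lambda>t::real. c * t) at_top at_top"
    using c by (intro filterlim_tendsto_pos_mult_at_top[OF tendsto_const] filterlim_ident) auto
  hence "filterlim (\<lambda>t::real. - (c * t)) at_bot at_top"
    by (simp add: filterlim_uminus_at_top)
  from filterlim_compose[OF exp_at_bot this] show ?thesis by simp
qed

lemma ev_small:
  assumes "c > 0" "e > 0"
  shows "eventually (\<lambda>t::real. K * exp (- c * t) < e) at_top"
proof -
  have "((\<lambda>t::real. K * exp (- c * t)) \<longlongrightarrow> K * 0) at_top"
    by (intro tendsto_mult tendsto_const exp_neg_lim assms)
  from order_tendstoD(2)[OF this] show ?thesis using assms by simp
qed

lemma cont_from_deriv:
  fixes f f' :: "real \<Rightarrow> real"
  assumes "\<And>t. t \<ge> 0 \<Longrightarrow> (f has_real_derivative f' t) (at t within {0..})"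
  shows "continuous_on {0..} f"
  unfolding continuous_on_eq_continuous_within
  using DERIV_continuous[OF assms] by auto

lemma mul_exp_neg: fixes x y a t :: real assumes "x \<le> y * exp (a * t)" shows "x * exp (- a * t) \<le> y"
proof -
  have "x * exp (- a * t) \<le> y * exp (a * t) * exp (- a * t)"
    using assms by (intro mult_right_mono) auto
  also have "... = y" by (simp add: mult.assoc exp_add[symmetric])
  finally show ?thesis .
qed

lemma half_step: "(r1::real) > 0 \<Longrightarrow> \<alpha> > 0 \<Longrightarrow> x \<le> y - r1/\<alpha> \<Longrightarrow> -x < r1 / (2 * \<alpha>) \<Longrightarrow> r1 / (2 * \<alpha>) < y"
proof -
  assume "x \<le> y - r1/\<alpha>" "-x < r1 / (2 * \<alpha>)"
  moreover have "r1/\<alpha> = r1 / (2 * \<alpha>) + r1 / (2 * \<alpha>)" by (simp add: field_simps)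
  ultimately show ?thesis by linarith
qed

lemma inv_step: "(r1::real) > 0 \<Longrightarrow> \<alpha> > 0 \<Longrightarrow> u > 0 \<Longrightarrow> r1 / (2 * \<alpha>) < 1 / u \<Longrightarrow> u < 2 * \<alpha> / r1"
  by (metis inverse_eq_divide inverse_divide inverse_inverse_eq less_imp_inverse_less zero_less_divide_iff zero_less_mult_iff zero_less_numeral)

lemma mul_exp_neg2: fixes x y a t :: real assumes "x * exp (a * t) \<le> y" shows "x \<le> y * exp (- a * t)"
proof -
  have "x * exp (a * t) * exp (- a * t) \<le> y * exp (- a * t)"
    using assms by (intro mult_right_mono) auto
  moreover have "x * exp (a * t) * exp (- a * t) = x" by (simp add: mult.assoc exp_add[symmetric])
  ultimately show ?thesis by linarith
qed

lemma algH: fixes U V W E \<alpha> r1 a12 a13 :: real assumes "U > 0" "\<alpha> > 0" shows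
 "((0 * U - 1 * (r1 * U * (1 - U) - a12 * U * V - a13 * U * W)) / (U * U) - 0) * E +
        E * (\<alpha> * 1) * (1 / U - r1 / \<alpha>) = E * ((- r1 + a12 * V + a13 * W + \<alpha>) / U)"
proof -
  have u: "U \<noteq> 0" "\<alpha> \<noteq> 0" using assms by auto
  have 1: "(0 * U - 1 * (r1 * U * (1 - U) - a12 * U * V - a13 * U * W)) / (U * U) - 0
     = (- r1 + r1 * U + a12 * V + a13 * W) / U"
    using u by (simp add: divide_simps) (simp add: algebra_simps)
  have 2: "E * (\<alpha> * 1) * (1 / U - r1 / \<alpha>) = (E * \<alpha>) / U - E * r1"
    using u by (simp add: divide_simps) (simp add: algebra_simps)
  show ?thesis unfolding 1 2 using u by (simp add: divide_simps) (simp add: algebra_simps)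
qed
theorem lemma2:
  fixes r1 r2 \<mu> a12 a13 a21 a31 :: real
    and u v w :: "real \<Rightarrow> real"
  assumes params: "r1 > 0" "r2 > 0" "\<mu> > 0" "a12 > 0" "a13 > 0" "a21 > 0" "a31 > 0"
    and hr: "r1 \<le> a12"
    and du: "\<And>t. t \<ge> 0 \<Longrightarrow>
       (u has_real_derivative (r1 * u t * (1 - u t) - a12 * u t * v t - a13 * u t * w t)) (at t within {0..})"
    and dv: "\<And>t. t \<ge> 0 \<Longrightarrow>
       (v has_real_derivative (r2 * v t * (1 - v t) + a21 * u t * v t)) (at t within {0..})"
    and dw: "\<And>t. t \<ge> 0 \<Longrightarrow>
       (w has_real_derivative (- \<mu> * w t + a31 * u t * w t)) (at t within {0..})"
    and init: "u 0 > 0" "v 0 > 0" "w 0 > 0"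
  shows "(u \<longlongrightarrow> 0) at_top \<and> (w \<longlongrightarrow> 0) at_top"
proof -
  have cu: "continuous_on {0..} u" by (rule cont_from_deriv[OF du])
  have cv: "continuous_on {0..} v" by (rule cont_from_deriv[OF dv])
  have cw: "continuous_on {0..} w" by (rule cont_from_deriv[OF dw])
  have upos: "u t > 0" if "t \<ge> 0" for t
  proof (rule pos_sol[where x = u and g = "\<lambda>t. r1 * (1 - u t) - a12 * v t - a13 * w t", OF _ _ init(1) that, rotated])
    show "continuous_on {0..} (\<lambda>t. r1 * (1 - u t) - a12 * v t - a13 * w t)"
      using cu cv cw by (intro continuous_intros)
    fix t :: real assume "t \<ge> 0"
    from du[OF this] show "(u has_real_derivative u t * (r1 * (1 - u t) - a12 * v t - a13 * w t)) (at t within {0..})"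
      by (rule DERIV_cong) (simp add: algebra_simps)
  qed
  have vpos: "v t > 0" if "t \<ge> 0" for t
  proof (rule pos_sol[where x = v and g = "\<lambda>t. r2 * (1 - v t) + a21 * u t", OF _ _ init(2) that, rotated])
    show "continuous_on {0..} (\<lambda>t. r2 * (1 - v t) + a21 * u t)"
      using cu cv by (intro continuous_intros)
    fix t :: real assume "t \<ge> 0"
    from dv[OF this] show "(v has_real_derivative v t * (r2 * (1 - v t) + a21 * u t)) (at t within {0..})"
      by (rule DERIV_cong) (simp add: algebra_simps)
  qed
  have wpos: "w t > 0" if "t \<ge> 0" for t
  proof (rule pos_sol[where x = w and g = "\<lambda>t. - \<mu> + a31 * u t", OF _ _ init(3) that, rotated])
    show "continuous_on {0..} (\<lambda>t. - \<mu> + a31 * u t)"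
      using cu by (intro continuous_intros)
    fix t :: real assume "t \<ge> 0"
    from dw[OF this] show "(w has_real_derivative w t * (- \<mu> + a31 * u t)) (at t within {0..})"
      by (rule DERIV_cong) (simp add: algebra_simps)
  qed
  define F where "F t = (1 / v t - 1) * exp (r2 * t)" for t
  have dF: "((\<lambda>t. - F t) has_real_derivative - (exp (r2*t) * (- a21 * u t / v t))) (at t within {0..})"
    if t: "t \<ge> 0" for t
  proof -
    have "((\<lambda>t. (1 / v t - 1) * exp (r2 * t)) has_real_derivative exp (r2*t) * (- a21 * u t / v t)) (at t within {0..})"
      using dv[OF t] vpos[OF t] by (auto intro!: derivative_eq_intros simp: field_simps power2_eq_square)
    thus ?thesis unfolding F_def by (intro derivative_intros)
  qed
  have Fle: "F t \<le> F 0" if "t \<ge> 0" for t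
  proof -
    have "0 \<le> exp (r2 * s) * (a21 * u s) / v s" if "0 \<le> s" for s
      using params upos[OF that] vpos[OF that] by simp
    thus ?thesis using incr_from[of 0 "\<lambda>t. - F t", OF _ dF _ _ that] by auto
  qed
  have vlim: "eventually (\<lambda>t. 1 / v t < 1 + \<eta>) at_top" if "\<eta> > 0" for \<eta>
  proof -
    have "eventually (\<lambda>t::real. F 0 * exp (- r2 * t) < \<eta>) at_top"
      by (rule ev_small) (use params that in auto)
    moreover have "eventually (\<lambda>t::real. t \<ge> 0) at_top" by (rule eventually_ge_at_top)
    ultimately show ?thesis
    proof eventually_elim
      case (elim t)
      have "(1 / v t - 1) * exp (r2 * t) \<le> F 0" using Fle[OF elim(2)] by (simp add: F_def)
      hence "1 / v t - 1 \<le> F 0 * exp (- r2 * t)"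
        by (rule mul_exp_neg2)
      thus ?case using elim(1) by simp
    qed
  qed
  have ulim: "eventually (\<lambda>t. u t < \<epsilon>) at_top" if eps: "\<epsilon> > 0" for \<epsilon>
  proof -
    define \<eta> where "\<eta> = \<epsilon> * r1 / (4 * a12)"
    have eta: "\<eta> > 0" using eps params by (simp add: \<eta>_def)
    from vlim[OF eta] obtain T0 where T0: "\<And>t. t \<ge> T0 \<Longrightarrow> 1 / v t < 1 + \<eta>"
      by (auto simp: eventually_at_top_linorder)
    define T where "T = max T0 0"
    define \<alpha> where "\<alpha> = a12 * \<eta> / (1 + \<eta>)"
    have al: "\<alpha> > 0" using eta params by (simp add: \<alpha>_def)
    have al2: "\<alpha> \<le> a12 * \<eta>" using eta params
      by (simp add: \<alpha>_def divide_le_eq mult_le_cancel_left_pos)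
    define H where "H t = (1 / u t - r1 / \<alpha>) * exp (\<alpha> * t)" for t
    have dH: "(H has_real_derivative exp (\<alpha> * t) * ((- r1 + a12 * v t + a13 * w t + \<alpha>) / u t)) (at t within {0..})"
      if t: "t \<ge> 0" for t
      unfolding H_def
      apply (rule DERIV_cong)
       apply (rule DERIV_mult[OF DERIV_diff[OF DERIV_divide[OF DERIV_const] DERIV_const] DERIV_exp[THEN DERIV_chain2, OF DERIV_cmult[OF DERIV_ident]]])
        apply (rule du[OF t])
      using upos[OF t] apply simp
      apply (rule algH)
      using upos[OF t] al apply simp_all
      done
    have Hnn: "exp (\<alpha> * t) * ((- r1 + a12 * v t + a13 * w t + \<alpha>) / u t) \<ge> 0" if t: "t \<ge> T" for t
    proof -
      have t0: "t \<ge> 0" "t \<ge> T0" using t by (auto simp: T_def)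
      have "1 / v t < 1 + \<eta>" by (rule T0[OF t0(2)])
      hence "1 < (1 + \<eta>) * v t" using vpos[OF t0(1)] by (simp add: divide_less_eq)
      hence "a12 < a12 * ((1 + \<eta>) * v t)" using params by simp
      hence "a12 / (1 + \<eta>) < a12 * v t" using eta by (simp add: pos_divide_less_eq algebra_simps)
      moreover have "\<alpha> = a12 - a12 / (1 + \<eta>)" using eta by (simp add: \<alpha>_def field_simps)
      ultimately have "- r1 + a12 * v t + a13 * w t + \<alpha> \<ge> 0"
        using hr mult_pos_pos[OF params(5) wpos[OF t0(1)]] by linarith
      thus ?thesis using upos[OF t0(1)] by simp
    qed
    have HT: "H T \<le> H t" if "t \<ge> T" for t
    proof (rule incr_from[of T H "\<lambda>s. exp (\<alpha> * s) * ((- r1 + a12 * v s + a13 * w s + \<alpha>) / u s)" T t])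
      show "0 \<le> T" by (simp add: T_def)
      show "T \<le> T" by simp
      show "T \<le> t" by (rule that)
      show "\<And>s. T \<le> s \<Longrightarrow> 0 \<le> exp (\<alpha> * s) * ((- r1 + a12 * v s + a13 * w s + \<alpha>) / u s)" by (rule Hnn)
      fix s assume "T \<le> s"
      hence "0 \<le> s" by (simp add: T_def)
      thus "(H has_real_derivative exp (\<alpha> * s) * ((- r1 + a12 * v s + a13 * w s + \<alpha>) / u s)) (at s within {0..})"
        by (rule dH)
    qed
    have "eventually (\<lambda>t::real. (- H T) * exp (- \<alpha> * t) < r1 / (2 * \<alpha>)) at_top"
      by (rule ev_small) (use al params in auto)
    moreover have "eventually (\<lambda>t::real. t \<ge> T) at_top" by (rule eventually_ge_at_top)
    ultimately show ?thesis
    proof eventually_elim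
      case (elim t)
      have t0: "t \<ge> 0" using elim(2) by (simp add: T_def)
      have "H T \<le> (1 / u t - r1 / \<alpha>) * exp (\<alpha> * t)" using HT[OF elim(2)] by (simp add: H_def)
      hence "H T * exp (- \<alpha> * t) \<le> 1 / u t - r1 / \<alpha>"
        by (rule mul_exp_neg)
      hence "r1 / (2 * \<alpha>) < 1 / u t" using elim(1) al params by (intro half_step) auto
      hence "u t < 2 * \<alpha> / r1" using upos[OF t0] al params by (intro inv_step) auto
      also have "... \<le> 2 * a12 * \<eta> / r1" using al2 params by (simp add: divide_right_mono)
      also have "... < \<epsilon>" using eps params by (simp add: \<eta>_def field_simps)
      finally show ?case .
    qed
  qed
  have utend: "(u \<longlongrightarrow> 0) at_top"
  proof (rule tendstoI)
    fix e :: real assume e: "e > 0"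
    from ulim[OF e] eventually_ge_at_top[of 0]
    show "eventually (\<lambda>t. dist (u t) 0 < e) at_top"
      by eventually_elim (metis upos abs_of_pos dist_real_def diff_zero)
  qed
  have "eventually (\<lambda>t. u t < \<mu> / (2 * a31)) at_top" by (rule ulim) (use params in auto)
  then obtain T1 where T1: "\<And>t. t \<ge> T1 \<Longrightarrow> u t < \<mu> / (2 * a31)"
    by (auto simp: eventually_at_top_linorder)
  define T where "T = max T1 0"
  define K where "K t = - (w t * exp (\<mu> / 2 * t))" for t
  have dK: "(K has_real_derivative - (exp (\<mu>/2 * t) * w t * (a31 * u t - \<mu> / 2))) (at t within {0..})"
    if t: "t \<ge> 0" for t
    unfolding K_def
    apply (rule DERIV_cong)
     apply (rule DERIV_minus[OF DERIV_mult[OF dw[OF t] DERIV_exp[THEN DERIV_chain2, OF DERIV_cmult[OF DERIV_ident]]]])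
    apply (simp add: algebra_simps)
    done
  have Knn: "- (exp (\<mu>/2 * t) * w t * (a31 * u t - \<mu> / 2)) \<ge> 0" if t: "t \<ge> T" for t
  proof -
    have t0: "t \<ge> 0" "t \<ge> T1" using t by (auto simp: T_def)
    have "a31 * u t < \<mu> / 2" using T1[OF t0(2)] params by (simp add: field_simps)
    thus ?thesis using wpos[OF t0(1)] by (simp add: mult_nonneg_nonpos)
  qed
  have KT: "K T \<le> K t" if "t \<ge> T" for t
  proof (rule incr_from[of T K "\<lambda>s. - (exp (\<mu>/2 * s) * w s * (a31 * u s - \<mu> / 2))" T t])
    show "0 \<le> T" by (simp add: T_def)
    show "T \<le> T" by simp
    show "T \<le> t" by (rule that)
    show "\<And>s. T \<le> s \<Longrightarrow> 0 \<le> - (exp (\<mu>/2 * s) * w s * (a31 * u s - \<mu> / 2))" by (rule Knn)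
    fix s assume "T \<le> s"
    hence "0 \<le> s" by (simp add: T_def)
    thus "(K has_real_derivative - (exp (\<mu>/2 * s) * w s * (a31 * u s - \<mu> / 2))) (at s within {0..})"
      by (rule dK)
  qed
  have wtend: "(w \<longlongrightarrow> 0) at_top"
  proof (rule tendstoI)
    fix e :: real assume e: "e > 0"
    have "eventually (\<lambda>t::real. (- K T) * exp (- (\<mu>/2) * t) < e) at_top"
      by (rule ev_small) (use e params in auto)
    moreover have "eventually (\<lambda>t::real. t \<ge> T) at_top" by (rule eventually_ge_at_top)
    ultimately show "eventually (\<lambda>t. dist (w t) 0 < e) at_top"
    proof eventually_elim
      case (elim t)
      have t0: "t \<ge> 0" using elim(2) by (simp add: T_def)
      have "w t * exp (\<mu> / 2 * t) \<le> - K T" using KT[OF elim(2)] by (simp add: K_def)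
      hence "w t \<le> (- K T) * exp (- (\<mu>/2) * t)"
        by (rule mul_exp_neg2)
      thus ?case using elim(1) wpos[OF t0] by simp
    qed
  qed
  show ?thesis using utend wtend by simp
qed

end
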